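(* Let $G$ be a $4$-critical non-complete graph with $n(G)$ vertices and $m(G)$ edges. Then $G$ contains at most $m(G)/2$ double-critical edges. Moreover, $G$ contains precisely $m(G)/2$ double-critical edges if and only if $G$ contains a vertex $v$ of degree $n(G)-1$ such that $G-v$ is an odd cycle of length at least $5$.
   Context: All graphs are finite and simple. A graph is $4$-critical if it is $4$-chromatic and $\chi(G-v)<\chi(G)$ for every vertex $v$. An edge $xy$ of $G$ is double-critical if $\chi(G-x-y)=\chi(G)-2$. *)

theory Defs
  imports Main
begin

definition graph :: "'a set \<Rightarrow> 'a set set \<Rightarrow> bool" where
  "graph V E \<longleftrightarrow> finite V \<and> (\<forall>e\<in>E. \<exists>x y. x \<noteq> y \<and> x \<in> V \<and> y \<in> V \<and> e = {x, y})"

definition colorable :: "'a set \<Rightarrow> 'a set set \<Rightarrow> nat \<Rightarrow> bool" where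
  "colorable V E k \<longleftrightarrow> (\<exists>f :: 'a \<Rightarrow> nat. (\<forall>v\<in>V. f v < k) \<and>
      (\<forall>x y. {x, y} \<in> E \<longrightarrow> x \<noteq> y \<longrightarrow> f x \<noteq> f y))"

definition chromatic_number :: "'a set \<Rightarrow> 'a set set \<Rightarrow> nat" where
  "chromatic_number V E = (LEAST k. colorable V E k)"

definition del_verts_E :: "'a set set \<Rightarrow> 'a set \<Rightarrow> 'a set set" where
  "del_verts_E E S = {e \<in> E. e \<inter> S = {}}"

definition k_critical :: "nat \<Rightarrow> 'a set \<Rightarrow> 'a set set \<Rightarrow> bool" where
  "k_critical k V E \<longleftrightarrow> chromatic_number V E = k \<and>
     (\<forall>v\<in>V. chromatic_number (V - {v}) (del_verts_E E {v}) < chromatic_number V E)"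

definition double_critical_edge :: "'a set \<Rightarrow> 'a set set \<Rightarrow> 'a set \<Rightarrow> bool" where
  "double_critical_edge V E e \<longleftrightarrow> e \<in> E \<and>
     chromatic_number (V - e) (del_verts_E E e) = chromatic_number V E - 2"

definition complete_graph :: "'a set \<Rightarrow> 'a set set \<Rightarrow> bool" where
  "complete_graph V E \<longleftrightarrow> (\<forall>x\<in>V. \<forall>y\<in>V. x \<noteq> y \<longrightarrow> {x, y} \<in> E)"

definition degree :: "'a set set \<Rightarrow> 'a \<Rightarrow> nat" where
  "degree E v = card {e \<in> E. v \<in> e}"

definition is_cycle :: "'a set \<Rightarrow> 'a set set \<Rightarrow> bool" where
  "is_cycle V E \<longleftrightarrow> (\<exists>xs. distinct xs \<and> set xs = V \<and> length xs \<ge> 3 \<and>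
     E = {{xs ! i, xs ! ((i + 1) mod length xs)} | i. i < length xs})"

end

theory Submission
  imports Defs
begin

lemma graph_edge:
  assumes "graph V E" "e \<in> E"
  obtains p q where "p \<noteq> q" "p \<in> V" "q \<in> V" "e = {p,q}"
  using assms unfolding graph_def by blast

lemma graph_finite_E:
  assumes "graph V E" shows "finite E"
proof -
  have "E \<subseteq> Pow V" using graph_edge[OF assms] by (metis PowI empty_subsetI insert_subset subsetI)
  moreover have "finite V" using assms unfolding graph_def by blast
  ultimately show ?thesis using finite_subset[of E "Pow V"] by simp
qed

lemma graph_del:
  assumes "graph V E" shows "graph (V - S) (del_verts_E E S)"
  unfolding graph_def
proof (intro conjI ballI)
  show "finite (V - S)" using assms unfolding graph_def by simp
  fix e assume "e \<in> del_verts_E E S"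
  then have e: "e \<in> E" "e \<inter> S = {}" unfolding del_verts_E_def by auto
  then obtain p q where "p \<noteq> q" "p \<in> V" "q \<in> V" "e = {p,q}" using graph_edge[OF assms] by metis
  then show "\<exists>x y. x \<noteq> y \<and> x \<in> V - S \<and> y \<in> V - S \<and> e = {x, y}" using e by auto
qed

lemma graph_colorable_ex:
  assumes "graph V E" shows "\<exists>k. colorable V E k"
proof -
  have fin: "finite V" using assms unfolding graph_def by simp
  obtain h where h: "bij_betw h V {0..<card V}" using ex_bij_betw_finite_nat[OF fin] by blast
  have "colorable V E (card V)"
    unfolding colorable_def
  proof (intro exI[of _ h] conjI allI impI)
    show "\<forall>v\<in>V. h v < card V" using h by (auto simp: bij_betw_def)
    fix x y assume "{x, y} \<in> E" "x \<noteq> y"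
    then have "x \<in> V" "y \<in> V" using graph_edge[OF assms] by (metis doubleton_eq_iff)+
    then show "h x \<noteq> h y" using h \<open>x \<noteq> y\<close> by (auto simp: bij_betw_def inj_on_def)
  qed
  then show ?thesis by blast
qed

lemma chi_colorable:
  assumes "graph V E" shows "colorable V E (chromatic_number V E)"
  unfolding chromatic_number_def using graph_colorable_ex[OF assms] by (rule LeastI_ex)

lemma colorable_chi_le:
  assumes "colorable V E k" shows "chromatic_number V E \<le> k"
  unfolding chromatic_number_def using assms by (rule Least_le)

lemma colorable_mono:
  assumes "colorable V E k" "k \<le> k'" shows "colorable V E k'"
  using assms unfolding colorable_def using order_less_le_trans by blast

lemma crit_not3:
  assumes "k_critical 4 V E" shows "\<not> colorable V E 3"
  using assms colorable_chi_le unfolding k_critical_def by fastforce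

lemma crit_vertex:
  assumes "graph V E" "k_critical 4 V E" "v \<in> V"
  shows "colorable (V - {v}) (del_verts_E E {v}) 3"
proof -
  have "chromatic_number (V - {v}) (del_verts_E E {v}) \<le> 3"
    using assms unfolding k_critical_def by auto
  then show ?thesis using chi_colorable[OF graph_del[OF assms(1)]] colorable_mono by blast
qed

lemma dc_colorable:
  assumes "graph V E" "k_critical 4 V E" "double_critical_edge V E e"
  shows "colorable (V - e) (del_verts_E E e) 2"
proof -
  have "chromatic_number (V - e) (del_verts_E E e) = 2"
    using assms unfolding k_critical_def double_critical_edge_def by auto
  then show ?thesis using chi_colorable[OF graph_del[OF assms(1)]] by metis
qed

lemma del_mem: "e \<in> del_verts_E E S \<longleftrightarrow> e \<in> E \<and> e \<inter> S = {}"
  unfolding del_verts_E_def by blast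

lemma disj_dc_aux:
  assumes G: "graph V E" and n3: "\<not> colorable V E 3"
    and xy: "{x,y} \<in> E" "x \<noteq> y" and uv: "{u,v} \<in> E" "u \<noteq> v"
    and disj: "x \<noteq> u" "x \<noteq> v" "y \<noteq> u" "y \<noteq> v"
    and c1: "colorable (V - {x,y}) (del_verts_E E {x,y}) 2"
    and c2: "colorable (V - {u,v}) (del_verts_E E {u,v}) 2"
    and nadj: "\<not> ({u,x} \<in> E \<and> {u,y} \<in> E)"
  shows False
proof -
  have inV: "p \<in> V \<and> q \<in> V" if "{p,q} \<in> E" for p q
    using graph_edge[OF G that] by (metis doubleton_eq_iff)
  obtain f1 where f1a: "\<forall>w\<in>V - {x,y}. f1 w < (2::nat)"
    and f1b: "\<forall>p q. {p,q} \<in> del_verts_E E {x,y} \<longrightarrow> p \<noteq> q \<longrightarrow> f1 p \<noteq> f1 q"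
    using c1 unfolding colorable_def by blast
  obtain f2 where f2a: "\<forall>w\<in>V - {u,v}. f2 w < (2::nat)"
    and f2b: "\<forall>p q. {p,q} \<in> del_verts_E E {u,v} \<longrightarrow> p \<noteq> q \<longrightarrow> f2 p \<noteq> f2 q"
    using c2 unfolding colorable_def by blast
  define a where "a w = (f1 w \<noteq> f1 u)" for w
  define b where "b w = (f2 w \<noteq> f2 x)" for w
  have A: "a p \<noteq> a q" if "{p,q} \<in> E" "p \<noteq> q" "p \<notin> {x,y}" "q \<notin> {x,y}" for p q
  proof -
    have "{p,q} \<in> del_verts_E E {x,y}" using that unfolding del_verts_E_def by auto
    then have "f1 p \<noteq> f1 q" using f1b that by blast
    moreover have "f1 p < 2" "f1 q < 2" "f1 u < 2" using f1a inV[OF that(1)] inV[OF uv(1)] that disj by auto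
    ultimately show ?thesis unfolding a_def by linarith
  qed
  have B: "b p \<noteq> b q" if "{p,q} \<in> E" "p \<noteq> q" "p \<notin> {u,v}" "q \<notin> {u,v}" for p q
  proof -
    have "{p,q} \<in> del_verts_E E {u,v}" using that unfolding del_verts_E_def by auto
    then have "f2 p \<noteq> f2 q" using f2b that by blast
    moreover have "f2 p < 2" "f2 q < 2" "f2 x < 2" using f2a inV[OF that(1)] inV[OF xy(1)] that disj by auto
    ultimately show ?thesis unfolding b_def by linarith
  qed
  have av: "a v" using A[OF uv] disj unfolding a_def by auto
  have bx: "\<not> b x" and au: "\<not> a u" unfolding a_def b_def by auto
  have "b y" using B[OF xy] disj bx by auto
  define c where "c w = (if w = x then 0 else if w = y then 2 else if w = v then 1
     else if w = u then (if {u,y} \<in> E then 0 else 2) else if a w then 1 else if b w then 2 else (0::nat))" for w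
  have sym: "{p,q} \<in> E \<longleftrightarrow> {q,p} \<in> E" for p q by (simp add: insert_commute)
  have "colorable V E 3"
    unfolding colorable_def
  proof (intro exI[of _ c] conjI allI impI ballI)
    show "c w < 3" for w unfolding c_def by auto
    fix p q assume e: "{p,q} \<in> E" "p \<noteq> q"
    have e': "{q,p} \<in> E" using e sym by blast
    show "c p \<noteq> c q"
      using A[OF e] A[OF e' e(2)[symmetric]] B[OF e] B[OF e' e(2)[symmetric]] av au bx \<open>b y\<close> nadj e e' disj xy uv
      unfolding c_def by (auto simp: insert_commute)
  qed
  then show False using n3 by blast
qed

lemma no_K4:
  assumes G: "graph V E" and K: "k_critical 4 V E" and NC: "\<not> complete_graph V E"
    and d: "x \<noteq> y" "x \<noteq> u" "x \<noteq> v" "y \<noteq> u" "y \<noteq> v" "u \<noteq> v"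
    and e: "{x,y} \<in> E" "{x,u} \<in> E" "{x,v} \<in> E" "{y,u} \<in> E" "{y,v} \<in> E" "{u,v} \<in> E"
  shows False
proof -
  have inV: "p \<in> V \<and> q \<in> V" if "{p,q} \<in> E" for p q
    using graph_edge[OF G that] by (metis doubleton_eq_iff)
  have V4: "x \<in> V" "y \<in> V" "u \<in> V" "v \<in> V" using inV e by auto
  show False
  proof (cases "V \<subseteq> {x,y,u,v}")
    case True
    have "complete_graph V E" unfolding complete_graph_def
    proof (intro ballI impI)
      fix p q assume "p \<in> V" "q \<in> V" "p \<noteq> q"
      then have "p \<in> {x,y,u,v}" "q \<in> {x,y,u,v}" using True by auto
      then show "{p,q} \<in> E" using e \<open>p \<noteq> q\<close> by (auto simp: insert_commute)
    qed
    then show False using NC by blast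
  next
    case False
    then obtain w where w: "w \<in> V" "w \<notin> {x,y,u,v}" by blast
    obtain f where fa: "\<forall>z\<in>V - {w}. f z < (3::nat)"
      and fb: "\<forall>p q. {p,q} \<in> del_verts_E E {w} \<longrightarrow> p \<noteq> q \<longrightarrow> f p \<noteq> f q"
      using crit_vertex[OF G K w(1)] unfolding colorable_def by blast
    have "f x < 3" "f y < 3" "f u < 3" "f v < 3" using fa V4 w by auto
    moreover have "f x \<noteq> f y" "f x \<noteq> f u" "f x \<noteq> f v" "f y \<noteq> f u" "f y \<noteq> f v" "f u \<noteq> f v"
      using fb e d w unfolding del_verts_E_def by auto
    ultimately show False by linarith
  qed
qed

lemma dc_intersect:
  assumes G: "graph V E" and K: "k_critical 4 V E" and NC: "\<not> complete_graph V E"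
    and d1: "double_critical_edge V E e1" and d2: "double_critical_edge V E e2"
  shows "e1 \<inter> e2 \<noteq> {}"
proof
  assume dis: "e1 \<inter> e2 = {}"
  have n3: "\<not> colorable V E 3" using crit_not3[OF K] .
  have "e1 \<in> E" "e2 \<in> E" using d1 d2 unfolding double_critical_edge_def by auto
  then obtain x y u v where xy: "x \<noteq> y" "e1 = {x,y}" and uv: "u \<noteq> v" "e2 = {u,v}"
    using graph_edge[OF G] by metis
  have c1: "colorable (V - {x,y}) (del_verts_E E {x,y}) 2" using dc_colorable[OF G K d1] xy by simp
  have c2: "colorable (V - {u,v}) (del_verts_E E {u,v}) 2" using dc_colorable[OF G K d2] uv by simp
  have exy: "{x,y} \<in> E" and euv: "{u,v} \<in> E" using \<open>e1 \<in> E\<close> \<open>e2 \<in> E\<close> xy uv by auto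
  have disj: "x \<noteq> u" "x \<noteq> v" "y \<noteq> u" "y \<noteq> v" using dis xy uv by auto
  show False
  proof (cases "{u,x} \<in> E \<and> {u,y} \<in> E")
    case False
    then show False using disj_dc_aux[OF G n3 exy xy(1) euv uv(1) disj c1 c2] by blast
  next
    case T1: True
    show False
    proof (cases "{v,x} \<in> E \<and> {v,y} \<in> E")
      case False
      have euv': "{v,u} \<in> E" using euv by (simp add: insert_commute)
      have c2': "colorable (V - {v,u}) (del_verts_E E {v,u}) 2" using c2 by (simp add: insert_commute)
      show False using disj_dc_aux[OF G n3 exy xy(1) euv' uv(1)[symmetric] _ _ _ _ c1 c2'] disj False by blast
    next
      case True
      then show False using no_K4[OF G K NC xy(1) disj uv(1)] T1 exy euv by (simp add: insert_commute)
    qed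
  qed
qed

definition nbr :: "'a set set \<Rightarrow> 'a \<Rightarrow> 'a set" where
  "nbr E w = {z. {w,z} \<in> E}"

lemma edge_ne: assumes "graph V E" "{p,q} \<in> E" shows "p \<noteq> q"
  using graph_edge[OF assms] by (metis doubleton_eq_iff)

lemma edge_inV: assumes "graph V E" "{p,q} \<in> E" shows "p \<in> V" "q \<in> V"
  using graph_edge[OF assms] by (metis doubleton_eq_iff)+

lemma nbr_sub: assumes "graph V E" shows "nbr E w \<subseteq> V - {w}"
  using edge_ne[OF assms] edge_inV[OF assms] unfolding nbr_def by blast

lemma finite_nbr: assumes "graph V E" shows "finite (nbr E w)"
  using nbr_sub[OF assms] assms unfolding graph_def by (meson finite_Diff finite_subset)

lemma inc_eq_img: assumes "graph V E"
  shows "{e \<in> E. w \<in> e} = (\<lambda>z. {w,z}) ` nbr E w"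
proof
  show "{e \<in> E. w \<in> e} \<subseteq> (\<lambda>z. {w, z}) ` nbr E w"
  proof
    fix e assume "e \<in> {e \<in> E. w \<in> e}"
    then have e: "e \<in> E" "w \<in> e" by auto
    obtain p q where "e = {p,q}" using graph_edge[OF assms e(1)] by metis
    then obtain z where "e = {w,z}" using e(2) by (auto simp: insert_commute)
    then show "e \<in> (\<lambda>z. {w, z}) ` nbr E w" using e unfolding nbr_def by auto
  qed
next
  show "(\<lambda>z. {w, z}) ` nbr E w \<subseteq> {e \<in> E. w \<in> e}" unfolding nbr_def by auto
qed

lemma inj_nbr: assumes "graph V E" shows "inj_on (\<lambda>z. {w,z}) (nbr E w)"
  unfolding inj_on_def nbr_def using edge_ne[OF assms] by (metis doubleton_eq_iff mem_Collect_eq)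

lemma degree_nbr: assumes "graph V E" shows "degree E w = card (nbr E w)"
  unfolding degree_def inc_eq_img[OF assms] using card_image[OF inj_nbr[OF assms]] .

lemma degree_le: assumes "graph V E" shows "degree E w \<le> card (V - {w})"
  unfolding degree_nbr[OF assms] using nbr_sub[OF assms] assms unfolding graph_def
  by (simp add: card_mono)

lemma degree_full: assumes "graph V E" "degree E w = card (V - {w})" "z \<in> V - {w}"
  shows "{w,z} \<in> E"
proof -
  have "nbr E w = V - {w}"
    using nbr_sub[OF assms(1)] assms(1,2) unfolding degree_nbr[OF assms(1)] graph_def
    by (meson card_subset_eq finite_Diff)
  then show ?thesis using assms(3) unfolding nbr_def by auto
qed

lemma deg_ge3:
  assumes G: "graph V E" and K: "k_critical 4 V E" and w: "w \<in> V"
  shows "degree E w \<ge> 3"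
proof (rule ccontr)
  assume "\<not> degree E w \<ge> 3"
  then have cN: "card (nbr E w) \<le> 2" using degree_nbr[OF G] by simp
  obtain f where fa: "\<forall>z\<in>V - {w}. f z < (3::nat)"
    and fb: "\<forall>p q. {p,q} \<in> del_verts_E E {w} \<longrightarrow> p \<noteq> q \<longrightarrow> f p \<noteq> f q"
    using crit_vertex[OF G K w] unfolding colorable_def by blast
  have "card (f ` nbr E w) \<le> card (nbr E w)" by (rule card_image_le[OF finite_nbr[OF G]])
  then have "card (f ` nbr E w) \<le> 2" using cN by linarith
  moreover have "\<not> {0,1,2::nat} \<subseteq> f ` nbr E w" if "card (f ` nbr E w) \<le> 2"
  proof
    assume "{0,1,2::nat} \<subseteq> f ` nbr E w"
    then have "card {0,1,2::nat} \<le> card (f ` nbr E w)"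
      by (rule card_mono[OF finite_imageI[OF finite_nbr[OF G]]])
    then show False using that by simp
  qed
  ultimately have "\<not> {0,1,2::nat} \<subseteq> f ` nbr E w" by blast
  then obtain c where c: "c \<in> {0,1,2::nat}" "c \<notin> f ` nbr E w" unfolding subset_iff by blast
  define g where "g = f(w := c)"
  have "colorable V E 3" unfolding colorable_def
  proof (intro exI[of _ g] conjI allI impI ballI)
    fix z assume z: "z \<in> V"
    show "g z < 3"
    proof (cases "z = w")
      case True then show ?thesis using c(1) unfolding g_def by auto
    next
      case False then show ?thesis using fa z unfolding g_def by simp
    qed
  next
    fix p q assume e: "{p,q} \<in> E" "p \<noteq> q"
    show "g p \<noteq> g q"
    proof (cases "p = w")
      case True
      then have q: "q \<in> nbr E w" using e unfolding nbr_def by simp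
      have "g p = c" "g q = f q" using True e(2) unfolding g_def by simp_all
      then show ?thesis using c(2) q by (metis image_eqI)
    next
      case pw: False
      show ?thesis
      proof (cases "q = w")
        case True
        then have p: "p \<in> nbr E w" using e unfolding nbr_def by (simp add: insert_commute)
        have "g q = c" "g p = f p" using True e(2) unfolding g_def by simp_all
        then show ?thesis using c(2) p by (metis image_eqI)
      next
        case False
        then have "{p,q} \<in> del_verts_E E {w}" using e pw unfolding del_verts_E_def by simp
        then have "f p \<noteq> f q" using fb e(2) by blast
        then show ?thesis using pw False unfolding g_def by simp
      qed
    qed
  qed
  then show False using crit_not3[OF K] by blast
qed

lemma handshake:
  assumes G: "graph V E" shows "(\<Sum>w\<in>V. degree E w) = 2 * card E"
proof -
  have fV: "finite V" using G unfolding graph_def by simp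
  have fE: "finite E" using graph_finite_E[OF G] .
  have "(\<Sum>w\<in>V. degree E w) = (\<Sum>w\<in>V. \<Sum>e\<in>E. if w \<in> e then 1 else 0)"
    unfolding degree_def by (simp add: fE sum.If_cases[of E] Int_def)
  also have "\<dots> = (\<Sum>e\<in>E. \<Sum>w\<in>V. if w \<in> e then 1 else 0)" by (rule sum.swap)
  also have "\<dots> = (\<Sum>e\<in>E. card (V \<inter> e))" by (simp add: fV sum.If_cases Int_def)
  also have "\<dots> = (\<Sum>e\<in>E. 2)"
  proof (rule sum.cong)
    fix e assume "e \<in> E"
    then obtain p q where "p \<noteq> q" "p \<in> V" "q \<in> V" "e = {p,q}" using graph_edge[OF G] by metis
    then show "card (V \<inter> e) = 2" by auto
  qed simp
  finally show ?thesis by simp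
qed

lemma card_ge5:
  assumes G: "graph V E" and n3: "\<not> colorable V E 3" and NC: "\<not> complete_graph V E"
  shows "card V \<ge> 5"
proof (rule ccontr)
  assume "\<not> card V \<ge> 5"
  then have c4: "card V \<le> 4" by simp
  have fV: "finite V" using G unfolding graph_def by simp
  obtain p q where pq: "p \<in> V" "q \<in> V" "p \<noteq> q" "{p,q} \<notin> E"
    using NC unfolding complete_graph_def by blast
  define R where "R = V - {p,q}"
  have cR: "card R \<le> 2" unfolding R_def using c4 pq fV by (simp add: card_Diff_subset)
  obtain h where h: "bij_betw h R {0..<card R}" using ex_bij_betw_finite_nat fV R_def by blast
  define f where "f w = (if w \<in> R then h w + 1 else 0)" for w
  have "colorable V E 3" unfolding colorable_def
  proof (intro exI[of _ f] conjI allI impI ballI)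
    fix w assume "w \<in> V"
    show "f w < 3"
    proof (cases "w \<in> R")
      case True then have "h w < card R" using h by (auto simp: bij_betw_def)
      then show ?thesis using cR True unfolding f_def by simp
    qed (simp add: f_def)
  next
    fix s t assume e: "{s,t} \<in> E" "s \<noteq> t"
    have st: "s \<in> V" "t \<in> V" using edge_inV[OF G e(1)] by auto
    show "f s \<noteq> f t"
    proof (cases "s \<in> R \<and> t \<in> R")
      case True
      then have "h s \<noteq> h t" using h e(2) by (auto simp: bij_betw_def inj_on_def)
      then show ?thesis using True unfolding f_def by simp
    next
      case False
      have "\<not> (s \<notin> R \<and> t \<notin> R)"
      proof
        assume "s \<notin> R \<and> t \<notin> R"
        then have "s \<in> {p,q}" "t \<in> {p,q}" using st unfolding R_def by auto
        then have "{s,t} = {p,q}" using e(2) by auto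
        then show False using e(1) pq(4) by simp
      qed
      then show ?thesis using False unfolding f_def by auto
    qed
  qed
  then show False using n3 by blast
qed

fun walk :: "('a \<Rightarrow> 'a set) \<Rightarrow> 'a \<Rightarrow> 'a \<Rightarrow> nat \<Rightarrow> 'a" where
  "walk N a b 0 = a"
| "walk N a b (Suc 0) = b"
| "walk N a b (Suc (Suc k)) = (SOME z. z \<in> N (walk N a b (Suc k)) \<and> z \<noteq> walk N a b k)"

lemma card_two_eq:
  assumes "card S = 2" "p \<in> S" "q \<in> S" "p \<noteq> q" shows "S = {p,q}"
proof -
  have fS: "finite S" using assms(1) by (metis card.infinite zero_neq_numeral)
  have "{p,q} \<subseteq> S" using assms by auto
  moreover have "card {p,q} = card S" using assms by simp
  ultimately show ?thesis using card_subset_eq[OF fS] by metis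
qed

lemma card_two_other:
  assumes "card S = 2" shows "\<exists>z. z \<in> S \<and> z \<noteq> y"
proof -
  obtain p q where "S = {p,q}" "p \<noteq> q" using assms card_2_iff by metis
  then show ?thesis by auto
qed

lemma walk_cycle:
  assumes fin: "finite U"
    and reg: "\<And>w. w \<in> U \<Longrightarrow> N w \<subseteq> U \<and> card (N w) = 2 \<and> w \<notin> N w"
    and sym: "\<And>w z. w \<in> U \<Longrightarrow> z \<in> N w \<Longrightarrow> w \<in> N z"
    and a: "a \<in> U" and b: "b \<in> N a"
  shows "\<exists>L\<ge>3. distinct (map (walk N a b) [0..<L]) \<and> (\<forall>k<L. walk N a b k \<in> U) \<and>
     (\<forall>k<L. N (walk N a b k) = {walk N a b ((k+1) mod L), walk N a b ((k+L-1) mod L)})"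
proof -
  define W where "W = walk N a b"
  have step: "W (Suc (Suc k)) \<in> N (W (Suc k)) \<and> W (Suc (Suc k)) \<noteq> W k" if "W (Suc k) \<in> U" for k
  proof -
    have c2: "card (N (W (Suc k))) = 2" using reg[OF that] by simp
    have "\<exists>z. z \<in> N (W (Suc k)) \<and> z \<noteq> W k" by (rule card_two_other[OF c2])
    then have "(SOME z. z \<in> N (W (Suc k)) \<and> z \<noteq> W k) \<in> N (W (Suc k)) \<and>
        (SOME z. z \<in> N (W (Suc k)) \<and> z \<noteq> W k) \<noteq> W k" by (rule someI_ex)
    then show ?thesis unfolding W_def by simp
  qed
  have Q: "W k \<in> U \<and> W (Suc k) \<in> N (W k)" for k
  proof (induction k)
    case 0 then show ?case using a b unfolding W_def by simp
  next
    case (Suc k)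
    then have "W (Suc k) \<in> U" using reg[of "W k"] by blast
    then show ?case using step[of k] by simp
  qed
  have inU: "W k \<in> U" for k using Q by blast
  have nxt: "W (Suc k) \<in> N (W k)" for k using Q by blast
  have prv: "W k \<in> N (W (Suc k))" for k using sym[OF inU nxt] .
  have ne2: "W (Suc (Suc k)) \<noteq> W k" for k using step inU by blast
  have ne1: "W (Suc k) \<noteq> W k" for k using nxt[of k] reg[OF inU[of k]] by auto
  have "\<not> inj_on W {0..card U}"
  proof
    assume inj: "inj_on W {0..card U}"
    have "W ` {0..card U} \<subseteq> U" using inU by auto
    then have "card (W ` {0..card U}) \<le> card U" using card_mono[OF fin] by blast
    then show False using card_image[OF inj] by simp
  qed
  then obtain i j where ij: "i \<noteq> j" "W i = W j" unfolding inj_on_def by blast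
  define P where "P j = (\<exists>i<j. W i = W j)" for j
  have "P (max i j)" unfolding P_def using ij by (cases "i < j") (auto simp: max_def intro: exI[of _ j])
  define L where "L = (LEAST j. P j)"
  have PL: "P L" unfolding L_def by (rule LeastI) fact
  have notP: "\<not> P j" if "j < L" for j using not_less_Least[OF that[unfolded L_def]] unfolding L_def .
  have dist: "W i \<noteq> W j" if "i < j" "j < L" for i j using notP[OF that(2)] that(1) unfolding P_def by blast
  obtain i0 where i0: "i0 < L" "W i0 = W L" using PL unfolding P_def by blast
  have i00: "i0 = 0"
  proof (rule ccontr)
    assume "i0 \<noteq> 0"
    then obtain h where h: "i0 = Suc h" by (cases i0) auto
    have "Suc i0 \<noteq> L"
    proof
      assume "Suc i0 = L" then have "W (Suc i0) = W i0" using i0 by simp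
      then show False using ne1 by metis
    qed
    then have si: "Suc i0 < L" using i0 by simp
    have Nw: "N (W i0) = {W h, W (Suc i0)}"
    proof (rule card_two_eq)
      show "card (N (W i0)) = 2" using reg[OF inU] by simp
      show "W h \<in> N (W i0)" using prv h by simp
      show "W (Suc i0) \<in> N (W i0)" using nxt .
      show "W h \<noteq> W (Suc i0)" using dist[of h "Suc i0"] si h by simp
    qed
    obtain l where l: "L = Suc l" using i0 by (cases L) auto
    have "W l \<in> N (W L)" using prv l by simp
    then have "W l \<in> {W h, W (Suc i0)}" using Nw i0 by simp
    moreover have "W l \<noteq> W h"
    proof -
      have "h < l" using h i0 l by simp
      then show ?thesis using dist[of h l] l by simp
    qed
    ultimately have "W l = W (Suc i0)" by simp
    then have "l = Suc i0"
      using dist[of l "Suc i0"] dist[of "Suc i0" l] si l by (metis linorder_neqE_nat lessI)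
    then have "W (Suc (Suc i0)) = W i0" using l i0 by simp
    then show False using ne2[of i0] by simp
  qed
  have WL: "W L = a" using i0 i00 unfolding W_def by simp
  have L0: "L \<noteq> 0" using i0 by simp
  have L1: "L \<noteq> 1" using WL ne1[of 0] unfolding W_def by auto
  have L2: "L \<noteq> 2" using WL ne2[of 0] unfolding W_def by (auto simp: numeral_2_eq_2)
  have L3: "L \<ge> 3" using L0 L1 L2 by simp
  have W0: "W 0 = a" unfolding W_def by simp
  have distinct: "distinct (map W [0..<L])"
    unfolding distinct_conv_nth by (auto dest: dist simp: nat_neq_iff)
  have Nk: "N (W k) = {W ((k+1) mod L), W ((k+L-1) mod L)}" if k: "k < L" for k
  proof (cases "k = 0")
    case True
    obtain l where l: "L = Suc l" using L0 by (cases L) auto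
    have "N (W 0) = {W 1, W l}"
    proof (rule card_two_eq)
      show "card (N (W 0)) = 2" using reg[OF inU] by simp
      show "W 1 \<in> N (W 0)" using nxt[of 0] by simp
      show "W l \<in> N (W 0)" using prv[of l] l WL W0 by simp
      show "W 1 \<noteq> W l" using dist[of 1 l] l L3 by simp
    qed
    moreover have "(0+1) mod L = 1" "(0+L-1) mod L = l" using L3 l by auto
    ultimately show ?thesis using True by simp
  next
    case False
    then obtain h where h: "k = Suc h" by (cases k) auto
    have m1: "(k+L-1) mod L = h" using h k by simp
    show ?thesis
    proof (cases "Suc k = L")
      case True
      have "N (W k) = {W 0, W h}"
      proof (rule card_two_eq)
        show "card (N (W k)) = 2" using reg[OF inU] by simp
        show "W 0 \<in> N (W k)" using nxt[of k] True WL W0 by simp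
        show "W h \<in> N (W k)" using prv[of h] h by simp
        show "W 0 \<noteq> W h" using dist[of 0 h] h L3 True by simp
      qed
      moreover have "(k+1) mod L = 0" using True by simp
      ultimately show ?thesis using m1 by auto
    next
      case False
      have "N (W k) = {W (Suc k), W h}"
      proof (rule card_two_eq)
        show "card (N (W k)) = 2" using reg[OF inU] by simp
        show "W (Suc k) \<in> N (W k)" using nxt[of k] by simp
        show "W h \<in> N (W k)" using prv[of h] h by simp
        show "W (Suc k) \<noteq> W h" using dist[of h "Suc k"] h k False by simp
      qed
      moreover have "(k+1) mod L = Suc k" using False k by simp
      ultimately show ?thesis using m1 by simp
    qed
  qed
  show ?thesis
    using L3 distinct inU Nk unfolding W_def by blast
qed

lemma degree_del_x:
  assumes G: "graph V E" and e: "{x,w} \<in> E" and xw: "x \<noteq> w"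
  shows "degree E w = degree (del_verts_E E {x}) w + 1"
proof -
  have eq: "{e \<in> E. w \<in> e} = insert {x,w} {e \<in> del_verts_E E {x}. w \<in> e}"
  proof
    show "{e \<in> E. w \<in> e} \<subseteq> insert {x, w} {e \<in> del_verts_E E {x}. w \<in> e}"
    proof
      fix e assume h: "e \<in> {e \<in> E. w \<in> e}"
      then obtain p q where pq: "e = {p,q}" using graph_edge[OF G] by blast
      show "e \<in> insert {x, w} {e \<in> del_verts_E E {x}. w \<in> e}"
      proof (cases "x \<in> e")
        case True then have "e = {x,w}" using h pq xw by auto
        then show ?thesis by simp
      next
        case False then show ?thesis using h unfolding del_verts_E_def by auto
      qed
    qed
    show "insert {x, w} {e \<in> del_verts_E E {x}. w \<in> e} \<subseteq> {e \<in> E. w \<in> e}"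
      using e unfolding del_verts_E_def by auto
  qed
  have fin: "finite {e \<in> del_verts_E E {x}. w \<in> e}"
    using graph_finite_E[OF G] unfolding del_verts_E_def by simp
  have "{x,w} \<notin> {e \<in> del_verts_E E {x}. w \<in> e}" unfolding del_verts_E_def by auto
  then show ?thesis unfolding degree_def eq using fin by simp
qed

lemma mod_pred_succ:
  fixes k L :: nat
  assumes "k < L" shows "((k + L - 1) mod L + 1) mod L = k"
proof -
  have "((k + L - 1) mod L + 1) mod L = (k + L - 1 + 1) mod L" by (rule mod_add_left_eq)
  also have "\<dots> = (k + L) mod L" using assms by simp
  also have "\<dots> = k" using assms by simp
  finally show ?thesis .
qed

lemma wheel_forward:
  assumes G: "graph V E" and K: "k_critical 4 V E" and NC: "\<not> complete_graph V E"
    and x: "x \<in> V"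
    and full: "\<forall>z\<in>V - {x}. {x,z} \<in> E"
    and dcs: "\<forall>z\<in>V - {x}. colorable (V - {x,z}) (del_verts_E E {x,z}) 2"
    and deg3: "\<forall>w\<in>V - {x}. degree E w = 3"
  shows "is_cycle (V - {x}) (del_verts_E E {x}) \<and> odd (card (V - {x})) \<and> card (V - {x}) \<ge> 5"
proof -
  define U where "U = V - {x}"
  define EH where "EH = del_verts_E E {x}"
  define N where "N = nbr EH"
  have n3: "\<not> colorable V E 3" using crit_not3[OF K] .
  have GH: "graph U EH" unfolding U_def EH_def by (rule graph_del[OF G])
  have fV: "finite V" using G unfolding graph_def by simp
  have fU: "finite U" unfolding U_def using fV by simp
  have reg: "N w \<subseteq> U \<and> card (N w) = 2 \<and> w \<notin> N w" if w: "w \<in> U" for w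
  proof -
    have "N w \<subseteq> U - {w}" unfolding N_def by (rule nbr_sub[OF GH])
    moreover have "degree E w = degree EH w + 1"
      unfolding EH_def by (rule degree_del_x[OF G]) (use full w U_def in auto)
    then have "card (N w) = 2" using deg3 w degree_nbr[OF GH, of w] unfolding U_def N_def by simp
    ultimately show ?thesis by auto
  qed
  have sym: "w \<in> N z" if "z \<in> N w" for w z using that unfolding N_def nbr_def by (simp add: insert_commute)
  have cV: "card V \<ge> 5" using card_ge5[OF G n3 NC] .
  have cU: "card U \<ge> 4" unfolding U_def using cV x fV by simp
  then have "U \<noteq> {}" by auto
  then obtain a where a: "a \<in> U" by blast
  have "card (N a) = 2" using reg[OF a] by simp
  then obtain b where b: "b \<in> N a" using card_two_other[of "N a" a] by blast
  have ex: "\<exists>L\<ge>3. distinct (map (walk N a b) [0..<L]) \<and> (\<forall>k<L. walk N a b k \<in> U) \<and>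
     (\<forall>k<L. N (walk N a b k) = {walk N a b ((k+1) mod L), walk N a b ((k+L-1) mod L)})"
    apply (rule walk_cycle[OF fU])
    using reg sym a b by auto
  obtain L where L3: "L \<ge> 3" and dist: "distinct (map (walk N a b) [0..<L])"
    and inU: "\<forall>k<L. walk N a b k \<in> U"
    and Nk: "\<forall>k<L. N (walk N a b k) = {walk N a b ((k+1) mod L), walk N a b ((k+L-1) mod L)}"
    using ex by blast
  define W where "W = walk N a b"
  define C where "C = W ` {0..<L}"
  have W0: "W 0 = a" unfolding W_def by simp
  have injW: "inj_on W {0..<L}" using dist unfolding W_def by (simp add: distinct_map)
  have CU: "C \<subseteq> U" using inU unfolding C_def W_def by auto
  have aC: "a \<in> C" unfolding C_def using W0 L3 by force
  have nxtE: "{W k, W ((k+1) mod L)} \<in> EH" if "k < L" for k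
  proof -
    have "W ((k+1) mod L) \<in> N (W k)" using Nk that unfolding W_def by auto
    then show ?thesis unfolding N_def nbr_def by simp
  qed
  have EHE: "e \<in> E" if "e \<in> EH" for e using that unfolding EH_def del_verts_E_def by simp
  have closed: "N (W k) \<subseteq> C" if "k < L" for k
    using Nk that L3 unfolding C_def W_def by auto
  have oddL: "odd L"
  proof
    assume evL: "even L"
    then obtain t where t: "L = 2 * t" by blast
    define idx where "idx w = (LEAST k. W k = w)" for w
    have idxW: "idx (W k) = k" if "k < L" for k
    proof -
      have le: "idx (W k) \<le> k" unfolding idx_def by (rule Least_le) simp
      have "W (idx (W k)) = W k" unfolding idx_def by (rule LeastI) simp
      then show ?thesis using injW le that unfolding inj_on_def by simp
    qed
    obtain ga where gaa: "\<forall>w\<in>V - {x,a}. ga w < (2::nat)"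
      and gab: "\<forall>p q. {p,q} \<in> del_verts_E E {x,a} \<longrightarrow> p \<noteq> q \<longrightarrow> ga p \<noteq> ga q"
      using dcs a unfolding U_def colorable_def by blast
    define col where "col w = (if w = x then 2 else if w \<in> C then idx w mod 2 else ga w)" for w
    have col2: "col w < 2" if "w \<in> V" "w \<noteq> x" for w
      using that gaa aC unfolding col_def by auto
    have inC: "col p \<noteq> col q" if e: "{p,q} \<in> EH" and pC: "p \<in> C" for p q
    proof -
      obtain k where k: "k < L" "p = W k" using pC unfolding C_def by auto
      have "q \<in> N (W k)" using e k unfolding N_def nbr_def by simp
      then have q: "q = W ((k+1) mod L) \<or> q = W ((k+L-1) mod L)" using Nk k unfolding W_def by auto
      have px: "p \<noteq> x" "q \<noteq> x" using e unfolding EH_def del_verts_E_def by auto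
      have qC: "q \<in> C" using q L3 unfolding C_def by auto
      have cp: "col p = k mod 2" using px pC k idxW unfolding col_def by simp
      have t2: "t \<ge> 2" using t L3 by simp
      show ?thesis
      proof (cases "q = W ((k+1) mod L)")
        case True
        have "col q = ((k+1) mod L) mod 2" using True px qC idxW L3 unfolding col_def by simp
        also have "\<dots> = (k+1) mod 2" by (rule mod_mod_cancel) (simp add: t)
        finally have "col q = (k+1) mod 2" .
        moreover have "(k+1) mod 2 \<noteq> k mod (2::nat)" by presburger
        ultimately show ?thesis using cp by simp
      next
        case False
        then have qq: "q = W ((k+L-1) mod L)" using q by simp
        have "col q = ((k+L-1) mod L) mod 2" using qq px qC idxW L3 unfolding col_def by simp
        also have "\<dots> = (k+L-1) mod 2" by (rule mod_mod_cancel) (simp add: t)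
        finally have "col q = (k+L-1) mod 2" .
        moreover have "(k+L-1) mod 2 \<noteq> k mod (2::nat)"
        proof -
          have "k+L-1 = (k+1) + 2*(t-1)" using t t2 by simp
          then have "(k+L-1) mod 2 = (k+1) mod 2" by simp
          moreover have "(k+1) mod 2 \<noteq> k mod (2::nat)" by presburger
          ultimately show ?thesis by simp
        qed
        ultimately show ?thesis using cp by simp
      qed
    qed
    have "colorable V E 3" unfolding colorable_def
    proof (intro exI[of _ col] conjI allI impI ballI)
      fix w assume w: "w \<in> V"
      show "col w < 3"
      proof (cases "w = x")
        case True then show ?thesis unfolding col_def by simp
      next
        case False then show ?thesis using col2[OF w] by simp
      qed
    next
      fix p q assume e: "{p,q} \<in> E" "p \<noteq> q"
      have pq: "p \<in> V" "q \<in> V" using edge_inV[OF G e(1)] by auto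
      show "col p \<noteq> col q"
      proof (cases "p = x \<or> q = x")
        case True
        have cx: "col x = 2" unfolding col_def by simp
        from True show ?thesis
        proof
          assume "p = x" then show ?thesis using col2[OF pq(2)] cx e(2) by auto
        next
          assume "q = x" then show ?thesis using col2[OF pq(1)] cx e(2) by auto
        qed
      next
        case False
        then have eH: "{p,q} \<in> EH" "{q,p} \<in> EH" using e unfolding EH_def del_verts_E_def by (auto simp: insert_commute)
        show ?thesis
        proof (cases "p \<in> C \<or> q \<in> C")
          case True
          then show ?thesis using inC[OF eH(1)] inC[OF eH(2)] by metis
        next
          case nC: False
          then have "p \<noteq> a" "q \<noteq> a" using aC by auto
          then have "{p,q} \<in> del_verts_E E {x,a}" using e False unfolding del_verts_E_def by auto
          then have "ga p \<noteq> ga q" using gab e(2) by blast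
          then show ?thesis using nC False unfolding col_def by simp
        qed
      qed
    qed
    then show False using n3 by blast
  qed
  have UC: "U \<subseteq> C"
  proof
    fix z assume z: "z \<in> U"
    show "z \<in> C"
    proof (rule ccontr)
      assume zC: "z \<notin> C"
      obtain gz where gza: "\<forall>w\<in>V - {x,z}. gz w < (2::nat)"
        and gzb: "\<forall>p q. {p,q} \<in> del_verts_E E {x,z} \<longrightarrow> p \<noteq> q \<longrightarrow> gz p \<noteq> gz q"
        using dcs z unfolding U_def colorable_def by blast
      have Wk: "W k \<in> V - {x,z}" if "k < L" for k
        using inU zC that unfolding W_def U_def C_def by auto
      have adj: "gz (W k) \<noteq> gz (W ((k+1) mod L))" if k: "k < L" for k
      proof -
        have "W ((k+1) mod L) \<in> C" unfolding C_def using L3 by auto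
        then have "{W k, W ((k+1) mod L)} \<in> del_verts_E E {x,z}"
          using nxtE[OF k] zC Wk[OF k] unfolding EH_def del_verts_E_def by auto
        moreover have "W k \<noteq> W ((k+1) mod L)" using nxtE[OF k] edge_ne[OF GH] by blast
        ultimately show ?thesis using gzb by blast
      qed
      have par: "gz (W k) = (gz (W 0) + k) mod 2" if "k < L" for k
        using that
      proof (induction k)
        case 0 then show ?case using gza Wk by simp
      next
        case (Suc k)
        have "gz (W k) \<noteq> gz (W (Suc k))" using adj[of k] Suc.prems by simp
        moreover have "gz (W k) < 2" "gz (W (Suc k)) < 2" using gza Wk Suc.prems by auto
        moreover have ih: "gz (W k) = (gz (W 0) + k) mod 2" using Suc by simp
        ultimately show ?case by presburger
      qed
      obtain l where l: "L = Suc l" using L3 by (cases L) auto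
      have g0: "gz (W 0) < 2" using gza Wk L3 by simp
      have ll: "l < L" using l by simp
      have "gz (W l) \<noteq> gz (W ((l+1) mod L))" by (rule adj[OF ll])
      then have ne: "gz (W l) \<noteq> gz (W 0)" using l by simp
      have pl: "gz (W l) = (gz (W 0) + l) mod 2" by (rule par[OF ll])
      have el: "even l" using oddL l by simp
      then obtain r where r: "l = 2 * r" by blast
      have "(gz (W 0) + l) mod 2 = gz (W 0) mod 2" unfolding r by simp
      also have "\<dots> = gz (W 0)" using g0 by simp
      finally show False using ne pl by simp
    qed
  qed
  have CeqU: "C = U" using CU UC by blast
  have cardU: "card U = L"
  proof -
    have "card U = card C" using CeqU by simp
    also have "\<dots> = L" unfolding C_def using card_image[OF injW] by simp
    finally show ?thesis .
  qed
  have L5: "L \<ge> 5" using cardU cU oddL by presburger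
  have cyc: "is_cycle U EH" unfolding is_cycle_def
  proof (intro exI[of _ "map W [0..<L]"] conjI)
    show "distinct (map W [0..<L])" using dist unfolding W_def .
    show "set (map W [0..<L]) = U" using CeqU unfolding C_def by simp
    show "3 \<le> length (map W [0..<L])" using L3 by simp
    show "EH = {{map W [0..<L] ! i, map W [0..<L] ! ((i + 1) mod length (map W [0..<L]))} |i. i < length (map W [0..<L])}"
    proof
      show "EH \<subseteq> {{map W [0..<L] ! i, map W [0..<L] ! ((i + 1) mod length (map W [0..<L]))} |i. i < length (map W [0..<L])}"
      proof
        fix e assume e: "e \<in> EH"
        obtain p q where pq: "p \<noteq> q" "p \<in> U" "q \<in> U" "e = {p,q}" using graph_edge[OF GH e] by blast
        obtain k where k: "k < L" "p = W k" using pq CeqU unfolding C_def by auto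
        have "q \<in> N (W k)" using e pq k unfolding N_def nbr_def by simp
        then have q: "q = W ((k+1) mod L) \<or> q = W ((k+L-1) mod L)" using Nk k unfolding W_def by auto
        have L0: "0 < L" using L3 by simp
        show "e \<in> {{map W [0..<L] ! i, map W [0..<L] ! ((i + 1) mod length (map W [0..<L]))} |i. i < length (map W [0..<L])}"
        proof (cases "q = W ((k+1) mod L)")
          case True
          then show ?thesis using k pq L0 by (auto intro!: exI[of _ k])
        next
          case False
          then have qq: "q = W ((k+L-1) mod L)" using q by simp
          define i where "i = (k+L-1) mod L"
          have i: "i < L" "(i + 1) mod L = k" unfolding i_def using L0 mod_pred_succ[OF k(1)] by auto
          have "e = {W i, W ((i+1) mod L)}" using pq k qq i unfolding i_def by (auto simp: insert_commute)
          then show ?thesis using i by (auto intro!: exI[of _ i])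
        qed
      qed
      show "{{map W [0..<L] ! i, map W [0..<L] ! ((i + 1) mod length (map W [0..<L]))} |i. i < length (map W [0..<L])} \<subseteq> EH"
        using nxtE by auto
    qed
  qed
  show ?thesis using cyc oddL cardU L5 unfolding U_def EH_def by simp
qed

lemma rel_succ:
  fixes i j L :: nat
  assumes "i < L" "j < L" "j \<noteq> i" "(j+1) mod L \<noteq> i"
  shows "((j+1) mod L + L - i) mod L = (j + L - i) mod L + 1"
proof (cases "j + 1 < L")
  case True
  then have j1: "(j+1) mod L = j + 1" by simp
  show ?thesis
  proof (cases "i \<le> j")
    case True
    have "(j + L - i) mod L = j - i" using True assms by (simp add: mod_if)
    moreover have "(j + 1 + L - i) mod L = j + 1 - i" using True assms \<open>j+1<L\<close> by (simp add: mod_if)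
    ultimately show ?thesis using j1 True by simp
  next
    case False
    then have ji: "j + 1 < i" using assms j1 by simp
    have a1: "(j + L - i) mod L = j + L - i" using ji assms by simp
    have a2: "(j + 1 + L - i) mod L = j + 1 + L - i" using ji assms by simp
    show ?thesis unfolding j1 a1 a2 using ji assms(1) by simp
  qed
next
  case False
  then have jL: "j + 1 = L" using assms by simp
  then have "(j+1) mod L = 0" by simp
  then have i0: "i \<noteq> 0" "i < j" using assms jL by auto
  have a1: "(j + L - i) mod L = j - i"
  proof -
    have e1: "j + L - i = (j - i) + L" using i0 by linarith
    have e2: "j - i < L" using jL by linarith
    have "((j - i) + L) mod L = (j - i) mod L" by (rule mod_add_self2)
    also have "\<dots> = j - i" using e2 by (rule mod_less)
    finally show ?thesis unfolding e1 .
  qed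
  have a2: "((j+1) mod L + L - i) mod L = L - i"
  proof -
    have "(j+1) mod L + L - i = L - i" using \<open>(j+1) mod L = 0\<close> by simp
    moreover have "L - i < L" using i0 assms(1) by linarith
    ultimately show ?thesis by simp
  qed
  show ?thesis unfolding a1 a2 using jL i0 by linarith
qed

lemma wheel_backward:
  assumes G: "graph V E" and K: "k_critical 4 V E" and v: "v \<in> V"
    and deg: "degree E v = card V - 1"
    and cyc: "is_cycle (V - {v}) (del_verts_E E {v})"
  shows "card E \<le> 2 * (card V - 1)" "\<forall>e\<in>E. v \<in> e \<longrightarrow> double_critical_edge V E e"
proof -
  obtain xs where xs: "distinct xs" "set xs = V - {v}" "length xs \<ge> 3"
    and EH: "del_verts_E E {v} = {{xs ! i, xs ! ((i + 1) mod length xs)} | i. i < length xs}"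
    using cyc unfolding is_cycle_def by blast
  define L where "L = length xs"
  have fV: "finite V" using G unfolding graph_def by simp
  have fE: "finite E" using graph_finite_E[OF G] .
  have cL: "card V - 1 = L" using distinct_card[OF xs(1)] xs(2) v fV unfolding L_def by simp
  have L3: "L \<ge> 3" using xs(3) unfolding L_def by simp
  have EH': "del_verts_E E {v} = (\<lambda>i. {xs ! i, xs ! ((i + 1) mod L)}) ` {..<L}"
    unfolding EH L_def by auto
  show "card E \<le> 2 * (card V - 1)"
  proof -
    have "E \<subseteq> {e \<in> E. v \<in> e} \<union> del_verts_E E {v}" unfolding del_verts_E_def by auto
    then have "card E \<le> card ({e \<in> E. v \<in> e} \<union> del_verts_E E {v})"
      by (rule card_mono[rotated]) (use fE in \<open>auto simp: del_verts_E_def\<close>)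
    also have "\<dots> \<le> card {e \<in> E. v \<in> e} + card (del_verts_E E {v})" by (rule card_Un_le)
    also have "card (del_verts_E E {v}) \<le> L" unfolding EH' using card_image_le[of "{..<L}"] by simp
    finally show ?thesis using deg cL unfolding degree_def by simp
  qed
  show "\<forall>e\<in>E. v \<in> e \<longrightarrow> double_critical_edge V E e"
  proof (intro ballI impI)
    fix e assume e: "e \<in> E" "v \<in> e"
    obtain p q where pq: "p \<noteq> q" "p \<in> V" "q \<in> V" "e = {p,q}" using graph_edge[OF G e(1)] by blast
    obtain y where y: "e = {v,y}" "y \<noteq> v" "y \<in> V"
      using pq e(2) by (metis doubleton_eq_iff insertE singletonD)
    then have "y \<in> set xs" using xs(2) by simp
    then obtain i where i: "i < L" "xs ! i = y" unfolding L_def in_set_conv_nth by blast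
    have nth_inj: "xs ! j = xs ! k \<longleftrightarrow> j = k" if "j < L" "k < L" for j k
      by (rule nth_eq_iff_index_eq[OF xs(1)]) (use that in \<open>simp_all add: L_def\<close>)
    have nth_in: "xs ! j \<in> V - {v}" if "j < L" for j
    proof -
      have "xs ! j \<in> set xs" using that unfolding L_def by (rule nth_mem)
      then show ?thesis using xs(2) by simp
    qed
    define idx where "idx w = (LEAST j. xs ! j = w)" for w
    have idx: "idx (xs ! j) = j" if j: "j < L" for j
    proof -
      have le: "idx (xs ! j) \<le> j" unfolding idx_def by (rule Least_le) simp
      have "xs ! (idx (xs ! j)) = xs ! j" unfolding idx_def by (rule LeastI) simp
      moreover have "idx (xs ! j) < L" using le j by simp
      ultimately show ?thesis using nth_inj[of "idx (xs ! j)" j] j by blast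
    qed
    define r where "r j = (j + L - i) mod L" for j
    define f where "f w = r (idx w) mod 2" for w
    have Ee: "V - e = V - {v,y}" using y by simp
    have delE: "{a,b} \<in> del_verts_E E {v,y} \<longleftrightarrow> {a,b} \<in> del_verts_E E {v} \<and> a \<noteq> y \<and> b \<noteq> y" for a b
      unfolding del_verts_E_def by auto
    have col2: "colorable (V - {v,y}) (del_verts_E E {v,y}) 2" unfolding colorable_def
    proof (intro exI[of _ f] conjI allI impI ballI)
      show "f w < 2" for w unfolding f_def by simp
      fix a b assume ab: "{a,b} \<in> del_verts_E E {v,y}" "a \<noteq> b"
      then have ab1: "{a,b} \<in> del_verts_E E {v}" "a \<noteq> y" "b \<noteq> y" using delE by auto
      then obtain j where j: "j < L" "{a,b} = {xs ! j, xs ! ((j + 1) mod L)}" unfolding EH' by auto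
      have jn: "(j+1) mod L < L" using L3 by simp
      have ji: "j \<noteq> i" "(j+1) mod L \<noteq> i"
        using j ab1 i by (auto simp: doubleton_eq_iff)
      have rs: "r ((j+1) mod L) = r j + 1" unfolding r_def by (rule rel_succ[OF i(1) j(1) ji])
      have fj: "f (xs ! j) = r j mod 2" "f (xs ! ((j+1) mod L)) = (r j + 1) mod 2"
        unfolding f_def using idx j(1) jn rs by auto
      have "f (xs ! j) \<noteq> f (xs ! ((j+1) mod L))" unfolding fj by presburger
      then show "f a \<noteq> f b" using j(2) by (auto simp: doubleton_eq_iff)
    qed
    have not1: "\<not> colorable (V - {v,y}) (del_verts_E E {v,y}) 1"
    proof
      assume "colorable (V - {v,y}) (del_verts_E E {v,y}) 1"
      then obtain g where ga: "\<forall>w\<in>V - {v,y}. g w < (1::nat)"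
        and gb: "\<forall>a b. {a,b} \<in> del_verts_E E {v,y} \<longrightarrow> a \<noteq> b \<longrightarrow> g a \<noteq> g b"
        unfolding colorable_def by blast
      define j where "j = (i+1) mod L"
      have jL: "j < L" unfolding j_def using L3 by simp
      have j1: "(j+1) mod L = (i+2) mod L" unfolding j_def by (simp add: mod_Suc_eq)
      have ne1: "j \<noteq> i" unfolding j_def using i(1) L3 by (auto simp: mod_if)
      have ne2: "(i+2) mod L \<noteq> i" using i(1) L3 by (auto simp: mod_if)
      have ne3: "(i+2) mod L \<noteq> j" unfolding j_def using i(1) L3 by (auto simp: mod_if)
      have k2: "(i+2) mod L < L" using L3 by simp
      have "{xs ! j, xs ! ((j+1) mod L)} \<in> del_verts_E E {v}" unfolding EH' using jL by auto
      then have "{xs ! j, xs ! ((i+2) mod L)} \<in> del_verts_E E {v,y}"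
        unfolding delE j1 using i nth_inj jL k2 ne1 ne2 by auto
      moreover have "xs ! j \<noteq> xs ! ((i+2) mod L)" using nth_inj jL k2 ne3 by simp
      ultimately have "g (xs ! j) \<noteq> g (xs ! ((i+2) mod L))" using gb by blast
      moreover have "xs ! j \<in> V - {v,y}" "xs ! ((i+2) mod L) \<in> V - {v,y}"
        using nth_in jL k2 nth_inj i ne1 ne2 by auto
      ultimately show False using ga by (metis less_one)
    qed
    have chi2: "chromatic_number (V - {v,y}) (del_verts_E E {v,y}) = 2"
      unfolding chromatic_number_def
    proof (rule Least_equality)
      show "colorable (V - {v,y}) (del_verts_E E {v,y}) 2" by (rule col2)
      fix k assume "colorable (V - {v,y}) (del_verts_E E {v,y}) k"
      then show "2 \<le> k" using not1 colorable_mono[of _ _ k 1] by (cases "k \<le> 1") auto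
    qed
    have "chromatic_number V E = 4" using K unfolding k_critical_def by simp
    then show "double_critical_edge V E e"
      unfolding double_critical_edge_def using e(1) chi2 y(1) by simp
  qed
qed

lemma sum_ge3:
  assumes "finite A" "\<forall>w\<in>A. (f w :: nat) \<ge> 3" shows "sum f A \<ge> 3 * card A"
proof -
  have "(\<Sum>w\<in>A. (3::nat)) \<le> sum f A" using assms(2) by (intro sum_mono) auto
  then show ?thesis by simp
qed

lemma sum_all_eq3:
  assumes fA: "finite A" and ge: "\<forall>w\<in>A. (f w :: nat) \<ge> 3" and le: "sum f A \<le> 3 * card A"
  shows "\<forall>w\<in>A. f w = 3"
proof (rule ccontr)
  assume "\<not> (\<forall>w\<in>A. f w = 3)"
  then obtain w where w: "w \<in> A" "f w \<ge> 4" using ge by fastforce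
  have "sum f A = f w + sum f (A - {w})" using sum.remove[OF fA w(1)] .
  moreover have "sum f (A - {w}) \<ge> 3 * card (A - {w})" using sum_ge3[of "A - {w}" f] fA ge by auto
  moreover have "card (A - {w}) = card A - 1" using w(1) fA by simp
  moreover have "card A \<ge> 1" using w(1) fA card_0_eq by fastforce
  ultimately show False using le w(2) by linarith
qed

abbreviation DC where "DC V E \<equiv> {e \<in> E. double_critical_edge V E e}"

abbreviation RHS where "RHS V E \<equiv> (\<exists>v\<in>V. degree E v = card V - 1 \<and>
            is_cycle (V - {v}) (del_verts_E E {v}) \<and> odd (card (V - {v})) \<and> card (V - {v}) \<ge> 5)"

lemma star_case:
  assumes G: "graph V E" and K: "k_critical 4 V E" and NC: "\<not> complete_graph V E"
    and x: "x \<in> V" and Dsub: "DC V E \<subseteq> {e \<in> E. x \<in> e}"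
  shows "2 * card (DC V E) \<le> card E \<and> (2 * card (DC V E) = card E \<longrightarrow> RHS V E)"
proof -
  have fV: "finite V" using G unfolding graph_def by simp
  have fE: "finite E" using graph_finite_E[OF G] .
  have fS: "finite {e \<in> E. x \<in> e}" using fE by simp
  have cD: "card (DC V E) \<le> degree E x" unfolding degree_def by (rule card_mono[OF fS Dsub])
  have hs: "(\<Sum>w\<in>V. degree E w) = 2 * card E" by (rule handshake[OF G])
  have split: "(\<Sum>w\<in>V. degree E w) = degree E x + (\<Sum>w\<in>V - {x}. degree E w)"
    by (rule sum.remove[OF fV x])
  have low: "(\<Sum>w\<in>V - {x}. degree E w) \<ge> 3 * card (V - {x})"
    using sum_ge3[of "V - {x}" "degree E"] fV deg_ge3[OF G K] by auto
  have dle: "degree E x \<le> card (V - {x})" by (rule degree_le[OF G])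
  have part1: "2 * card (DC V E) \<le> card E" using cD hs split low dle by linarith
  have part2: "RHS V E" if eq: "2 * card (DC V E) = card E"
  proof -
    have dx: "degree E x = card (V - {x})" using cD hs split low dle eq by linarith
    have sle: "(\<Sum>w\<in>V - {x}. degree E w) \<le> 3 * card (V - {x})" using cD hs split low dle eq by linarith
    have cDx: "card (DC V E) = degree E x" using cD hs split low dle eq by linarith
    have full: "\<forall>z\<in>V - {x}. {x,z} \<in> E" using degree_full[OF G dx] by blast
    have deg3: "\<forall>w\<in>V - {x}. degree E w = 3"
      using sum_all_eq3[of "V - {x}" "degree E"] fV deg_ge3[OF G K] sle by auto
    have Deq: "DC V E = {e \<in> E. x \<in> e}"
      using card_subset_eq[OF fS Dsub] cDx unfolding degree_def by simp
    have dcs: "\<forall>z\<in>V - {x}. colorable (V - {x,z}) (del_verts_E E {x,z}) 2"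
    proof
      fix z assume z: "z \<in> V - {x}"
      then have "{x,z} \<in> DC V E" using full Deq by auto
      then have "double_critical_edge V E {x,z}" by simp
      then show "colorable (V - {x,z}) (del_verts_E E {x,z}) 2" by (rule dc_colorable[OF G K])
    qed
    have W: "is_cycle (V - {x}) (del_verts_E E {x}) \<and> odd (card (V - {x})) \<and> card (V - {x}) \<ge> 5"
      by (rule wheel_forward[OF G K NC x full dcs deg3])
    have "degree E x = card V - 1" using dx x fV by simp
    then show ?thesis using W x by blast
  qed
  show ?thesis using part1 part2 by blast
qed

lemma tri_case:
  assumes G: "graph V E" and K: "k_critical 4 V E" and NC: "\<not> complete_graph V E"
    and Dsub: "DC V E \<subseteq> {{a,b},{b,c},{a,c}}"
  shows "2 * card (DC V E) < card E"
proof -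
  have fV: "finite V" using G unfolding graph_def by simp
  have c3: "card {{a,b},{b,c},{a,c}} \<le> 3"
    using card_length[of "[{a,b},{b,c},{a,c}]"] by simp
  have fT: "finite {{a,b},{b,c},{a,c}}" by simp
  have "card (DC V E) \<le> card {{a,b},{b,c},{a,c}}" by (rule card_mono[OF fT Dsub])
  then have cD: "card (DC V E) \<le> 3" using c3 by linarith
  have hs: "(\<Sum>w\<in>V. degree E w) = 2 * card E" by (rule handshake[OF G])
  have low: "(\<Sum>w\<in>V. degree E w) \<ge> 3 * card V"
    using sum_ge3[of V "degree E"] fV deg_ge3[OF G K] by auto
  have cV: "card V \<ge> 5" by (rule card_ge5[OF G crit_not3[OF K] NC])
  show ?thesis using hs low cV cD by linarith
qed

theorem theorem19:
  fixes V :: "'a set" and E :: "'a set set"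
  assumes "graph V E"
    and "k_critical 4 V E"
    and "\<not> complete_graph V E"
  shows "2 * card {e \<in> E. double_critical_edge V E e} \<le> card E \<and>
         (2 * card {e \<in> E. double_critical_edge V E e} = card E \<longleftrightarrow>
         (\<exists>v\<in>V. degree E v = card V - 1 \<and>
            is_cycle (V - {v}) (del_verts_E E {v}) \<and> odd (card (V - {v})) \<and> card (V - {v}) \<ge> 5))"
proof -
  note G = assms(1) and K = assms(2) and NC = assms(3)
  have fE: "finite E" using graph_finite_E[OF G] .
  have n3: "\<not> colorable V E 3" using crit_not3[OF K] .
  have bk: "card E \<le> 2 * card (DC V E)" if R: "RHS V E"
  proof -
    obtain v where v: "v \<in> V" "degree E v = card V - 1" "is_cycle (V - {v}) (del_verts_E E {v})"
      using R by blast
    have b1: "card E \<le> 2 * (card V - 1)" and b2: "\<forall>e\<in>E. v \<in> e \<longrightarrow> double_critical_edge V E e"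
      using wheel_backward[OF G K v] by auto
    have "{e \<in> E. v \<in> e} \<subseteq> DC V E" using b2 by auto
    then have "card {e \<in> E. v \<in> e} \<le> card (DC V E)" using fE by (intro card_mono) auto
    then show ?thesis using b1 v(2) unfolding degree_def by linarith
  qed
  have main: "2 * card (DC V E) \<le> card E \<and> (2 * card (DC V E) = card E \<longrightarrow> RHS V E)"
  proof (cases "DC V E = {}")
    case True
    have "card E \<noteq> 0"
    proof
      assume "card E = 0"
      then have "E = {}" using fE by simp
      then have "colorable V E 3" unfolding colorable_def by (intro exI[of _ "\<lambda>_. 0"]) auto
      then show False using n3 by blast
    qed
    moreover have "card (DC V E) = 0" using True by (simp only: card.empty)
    ultimately show ?thesis by linarith
  next
    case False
    then obtain e1 where e1: "e1 \<in> DC V E" by blast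
    have inter: "e \<inter> e' \<noteq> {}" if "e \<in> DC V E" "e' \<in> DC V E" for e e'
      using dc_intersect[OF G K NC] that by blast
    obtain a b where ab: "a \<noteq> b" "a \<in> V" "b \<in> V" "e1 = {a,b}" using graph_edge[OF G] e1 by blast
    show ?thesis
    proof (cases "\<forall>e\<in>DC V E. a \<in> e")
      case True
      then have "DC V E \<subseteq> {e \<in> E. a \<in> e}" by auto
      then show ?thesis by (rule star_case[OF G K NC ab(2)])
    next
      case Fa: False
      show ?thesis
      proof (cases "\<forall>e\<in>DC V E. b \<in> e")
        case True
        then have "DC V E \<subseteq> {e \<in> E. b \<in> e}" by auto
        then show ?thesis by (rule star_case[OF G K NC ab(3)])
      next
        case Fb: False
        obtain e2 where e2: "e2 \<in> DC V E" "a \<notin> e2" using Fa by blast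
        obtain e3 where e3: "e3 \<in> DC V E" "b \<notin> e3" using Fb by blast
        have "b \<in> e2" using inter[OF e1 e2(1)] ab(4) e2(2) by auto
        obtain p q where pq: "p \<noteq> q" "e2 = {p,q}" using graph_edge[OF G] e2(1) by blast
        obtain c where c: "e2 = {b,c}" "c \<noteq> b" "c \<noteq> a"
          using pq \<open>b \<in> e2\<close> e2(2) by (auto simp: insert_commute)
        have "a \<in> e3" using inter[OF e1 e3(1)] ab(4) e3(2) by auto
        obtain p' q' where pq': "p' \<noteq> q'" "e3 = {p',q'}" using graph_edge[OF G] e3(1) by blast
        obtain d where d: "e3 = {a,d}" "d \<noteq> a" "d \<noteq> b"
          using pq' \<open>a \<in> e3\<close> e3(2) by (auto simp: insert_commute)
        have "d = c" using inter[OF e2(1) e3(1)] c d ab(1) by auto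
        have sub: "DC V E \<subseteq> {{a,b},{b,c},{a,c}}"
        proof
          fix e assume e: "e \<in> DC V E"
          obtain s t where st: "s \<noteq> t" "e = {s,t}" using graph_edge[OF G] e by blast
          have i1: "e \<inter> {a,b} \<noteq> {}" using inter[OF e e1] ab(4) by simp
          have i2: "e \<inter> {b,c} \<noteq> {}" using inter[OF e e2(1)] c(1) by simp
          have i3: "e \<inter> {a,c} \<noteq> {}" using inter[OF e e3(1)] d(1) \<open>d = c\<close> by simp
          show "e \<in> {{a,b},{b,c},{a,c}}"
          proof (cases "c \<in> e")
            case True
            then obtain r where r: "e = {c,r}" using st by blast
            then have "r \<in> {a,b}" using i1 c(2,3) by auto
            then have "e = {a,c} \<or> e = {b,c}" using r by (auto simp: insert_commute)
            then show ?thesis by blast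
          next
            case False
            then have "b \<in> e" "a \<in> e" using i2 i3 by auto
            then have "e = {a,b}" using st ab(1) by auto
            then show ?thesis by blast
          qed
        qed
        have "2 * card (DC V E) < card E" by (rule tri_case[OF G K NC sub])
        then show ?thesis by simp
      qed
    qed
  qed
  have m1: "2 * card (DC V E) \<le> card E" and m2: "2 * card (DC V E) = card E \<Longrightarrow> RHS V E"
    using main by blast+
  show ?thesis
  proof (intro conjI iffI)
    show "2 * card (DC V E) \<le> card E" by (rule m1)
  next
    assume "2 * card (DC V E) = card E"
    then show "RHS V E" by (rule m2)
  next
    assume "RHS V E"
    then have "card E \<le> 2 * card (DC V E)" by (rule bk)
    then show "2 * card (DC V E) = card E" using m1 by linarith
  qed
qed

end
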